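(* Consider the linear system $\dot y = A^o_{11} y + A^o_{12} z + B^o_1 u$, $\dot z = A^o_{21} y + A^o_{22} z + B^o_2 u$, with output $y=[I_p\ 0][y;z]$, where $y\in\mathbb{R}^p$ are measured states, $z\in\mathbb{R}^{n^o-p}$ are hidden states and $u\in\mathbb{R}^m$ are inputs. Define $W^o(s)=A^o_{11}+A^o_{12}(sI-A^o_{22})^{-1}A^o_{21}$, $V^o(s)=B^o_1+A^o_{12}(sI-A^o_{22})^{-1}B^o_2$, $R^o=\mathrm{diag}\{W^o\}$ (the diagonal matrix formed from the diagonal entries of $W^o$), and the dynamical structure functions $Q=(sI-R^o)^{-1}(W^o-R^o)$, $P=(sI-R^o)^{-1}V^o$. Then \begin{align*} \mathrm{diag}\{A^o_{11}\}&=\lim_{s\to\infty}R^o(s),\\ A^o_{11}-\mathrm{diag}\{A^o_{11}\}&=\lim_{s\to\infty}sQ(s),\\ B^o_1&=\lim_{s\to\infty}sP(s). \end{align*}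
   Context: The dynamical structure functions $[Q,P]$ satisfy $Y=QY+PU$ in the Laplace domain, with $Q$ having zero diagonal; they encode the direct causal relations between measured states and between inputs and measured states. *)

theory Defs
  imports "HOL-Analysis.Analysis"
begin

text \<open>Real system matrices are embedded into complex matrices
  so that the transfer functions can be evaluated at complex s (Laplace domain).\<close>

definition cmat :: "real^'n^'k \<Rightarrow> complex^'n^'k" where
  "cmat A = (\<chi> i j. complex_of_real (A $ i $ j))"

definition diagm :: "'a::zero^'n^'n \<Rightarrow> 'a^'n^'n" where
  "diagm M = (\<chi> i j. if i = j then M $ i $ j else 0)"

definition Wo :: "real^'p^'p \<Rightarrow> real^'h^'p \<Rightarrow> real^'p^'h \<Rightarrow> real^'h^'h
                   \<Rightarrow> complex \<Rightarrow> complex^'p^'p" where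
  "Wo A11 A12 A21 A22 s =
     cmat A11 + cmat A12 ** matrix_inv (mat s - cmat A22) ** cmat A21"

definition Vo :: "real^'m^'p \<Rightarrow> real^'h^'p \<Rightarrow> real^'h^'h \<Rightarrow> real^'m^'h
                   \<Rightarrow> complex \<Rightarrow> complex^'m^'p" where
  "Vo B1 A12 A22 B2 s =
     cmat B1 + cmat A12 ** matrix_inv (mat s - cmat A22) ** cmat B2"

definition Ro :: "real^'p^'p \<Rightarrow> real^'h^'p \<Rightarrow> real^'p^'h \<Rightarrow> real^'h^'h
                   \<Rightarrow> complex \<Rightarrow> complex^'p^'p" where
  "Ro A11 A12 A21 A22 s = diagm (Wo A11 A12 A21 A22 s)"

definition DSF_Q :: "real^'p^'p \<Rightarrow> real^'h^'p \<Rightarrow> real^'p^'h \<Rightarrow> real^'h^'h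
                   \<Rightarrow> complex \<Rightarrow> complex^'p^'p" where
  "DSF_Q A11 A12 A21 A22 s =
     matrix_inv (mat s - Ro A11 A12 A21 A22 s) **
       (Wo A11 A12 A21 A22 s - Ro A11 A12 A21 A22 s)"

definition DSF_P :: "real^'p^'p \<Rightarrow> real^'h^'p \<Rightarrow> real^'p^'h \<Rightarrow> real^'h^'h
                   \<Rightarrow> real^'m^'p \<Rightarrow> real^'m^'h \<Rightarrow> complex \<Rightarrow> complex^'m^'p" where
  "DSF_P A11 A12 A21 A22 B1 B2 s =
     matrix_inv (mat s - Ro A11 A12 A21 A22 s) ** Vo B1 A12 A22 B2 s"

end

theory Submission
  imports Defs
begin

definition mnorm :: "complex^'n^'m \<Rightarrow> real" where
  "mnorm A = (\<Sum>i\<in>UNIV. \<Sum>j\<in>UNIV. norm (A$i$j))"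
definition vnorm :: "complex^'n \<Rightarrow> real" where
  "vnorm x = (\<Sum>i\<in>UNIV. norm (x$i))"

lemma mnorm_nonneg: "0 \<le> mnorm A"
  unfolding mnorm_def by (intro sum_nonneg) auto

lemma vnorm_nonneg: "0 \<le> vnorm x"
  unfolding vnorm_def by (intro sum_nonneg) auto

lemma entry_le_mnorm: "norm (A$i$j) \<le> mnorm A"
proof -
  have "norm (A$i$j) \<le> (\<Sum>j\<in>UNIV. norm (A$i$j))"
    by (rule member_le_sum) auto
  also have "\<dots> \<le> mnorm A" unfolding mnorm_def
    by (rule member_le_sum) (auto intro: sum_nonneg)
  finally show ?thesis .
qed

lemma entry_le_vnorm: "norm (x$i) \<le> vnorm x"
  unfolding vnorm_def by (rule member_le_sum) auto

lemma row_le_mnorm: "(\<Sum>j\<in>UNIV. norm (A$i$j)) \<le> mnorm A"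
  unfolding mnorm_def by (rule member_le_sum) (auto intro: sum_nonneg)

lemma mnorm_add: "mnorm (A + B) \<le> mnorm A + mnorm B"
  unfolding mnorm_def by (simp add: sum.distrib[symmetric] norm_triangle_ineq sum_mono)

lemma mnorm_mult:
  fixes A :: "complex^'k^'m" and B :: "complex^'n^'k"
  shows "mnorm (A ** B) \<le> mnorm A * mnorm B"
proof -
  have "mnorm (A ** B) \<le> (\<Sum>i\<in>UNIV. \<Sum>j\<in>UNIV. \<Sum>k\<in>UNIV. norm (A$i$k) * norm (B$k$j))"
    unfolding mnorm_def
    by (intro sum_mono) (simp add: matrix_matrix_mult_def norm_mult[symmetric] norm_sum)
  also have "\<dots> = (\<Sum>i\<in>UNIV. \<Sum>k\<in>UNIV. norm (A$i$k) * (\<Sum>j\<in>UNIV. norm (B$k$j)))"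
    by (intro sum.cong refl) (subst sum.swap, simp add: sum_distrib_left)
  also have "\<dots> \<le> (\<Sum>i\<in>UNIV. \<Sum>k\<in>UNIV. norm (A$i$k) * mnorm B)"
    by (intro sum_mono mult_left_mono row_le_mnorm) auto
  also have "\<dots> = mnorm A * mnorm B"
    by (simp add: mnorm_def sum_distrib_right)
  finally show ?thesis .
qed

lemma vnorm_mult:
  fixes A :: "complex^'n^'m"
  shows "vnorm (A *v x) \<le> mnorm A * vnorm x"
proof -
  have "vnorm (A *v x) \<le> (\<Sum>i\<in>UNIV. \<Sum>j\<in>UNIV. norm (A$i$j) * norm (x$j))"
    unfolding vnorm_def
    by (intro sum_mono) (simp add: matrix_vector_mult_def norm_mult[symmetric] norm_sum)
  also have "\<dots> \<le> (\<Sum>i\<in>UNIV. \<Sum>j\<in>UNIV. norm (A$i$j) * vnorm x)"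
    by (intro sum_mono mult_left_mono entry_le_vnorm) auto
  also have "\<dots> = mnorm A * vnorm x"
    by (simp add: mnorm_def sum_distrib_right)
  finally show ?thesis .
qed

lemma mnorm_mat1: "mnorm (mat 1 :: complex^'n^'n) = real CARD('n)"
proof -
  have "\<And>i. (\<Sum>j\<in>UNIV. norm ((mat 1 :: complex^'n^'n)$i$j)) = 1"
  proof -
    fix i :: 'n
    have e: "(\<lambda>j. norm ((mat 1 :: complex^'n^'n)$i$j)) = (\<lambda>j. if i = j then 1 else 0)"
      by (auto simp: mat_def)
    then show "(\<Sum>j\<in>UNIV. norm ((mat 1 :: complex^'n^'n)$i$j)) = 1"
      by (simp only: e) (simp add: sum.delta)
  qed
  then show ?thesis unfolding mnorm_def by simp
qed

lemma mnorm_tendsto_imp: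
  fixes f :: "_ \<Rightarrow> complex^'n^'m"
  assumes "((\<lambda>x. mnorm (f x - L)) \<longlongrightarrow> 0) F"
  shows "(f \<longlongrightarrow> L) F"
proof (intro vec_tendstoI)
  fix i j
  have "((\<lambda>x. f x $ i $ j - L $ i $ j) \<longlongrightarrow> 0) F"
  proof (rule tendsto_0_le[OF assms, where K=1], intro always_eventually allI)
    fix x
    have "norm ((f x - L) $ i $ j) \<le> mnorm (f x - L)" by (rule entry_le_mnorm)
    then show "norm (f x $ i $ j - L $ i $ j) \<le> norm (mnorm (f x - L)) * 1" by simp
  qed
  then show "((\<lambda>x. f x $ i $ j) \<longlongrightarrow> L $ i $ j) F" by (rule LIM_zero_cancel)
qed

lemma tendsto_imp_mnorm:
  fixes f :: "_ \<Rightarrow> complex^'n^'m"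
  assumes "(f \<longlongrightarrow> L) F"
  shows "((\<lambda>x. mnorm (f x)) \<longlongrightarrow> mnorm L) F"
  unfolding mnorm_def by (intro tendsto_intros assms)

lemma tendsto_matmul:
  fixes A :: "_ \<Rightarrow> complex^'k^'m" and B :: "_ \<Rightarrow> complex^'n^'k"
  assumes "(A \<longlongrightarrow> a) F" "(B \<longlongrightarrow> b) F"
  shows "((\<lambda>x. A x ** B x) \<longlongrightarrow> a ** b) F"
  unfolding matrix_matrix_mult_def
  by (intro vec_tendstoI) (simp, intro tendsto_intros assms)

lemma matrix_inv_props:
  fixes A :: "complex^'n^'n"
  assumes "invertible A"
  shows "A ** matrix_inv A = mat 1 \<and> matrix_inv A ** A = mat 1"
  using assms unfolding invertible_def matrix_inv_def by (rule someI_ex)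

lemma matrix_inv_eq:
  fixes A X :: "complex^'n^'n"
  assumes "A ** X = mat 1" "X ** A = mat 1"
  shows "matrix_inv A = X"
proof -
  have "invertible A" using assms unfolding invertible_def by blast
  from matrix_inv_props[OF this] have h: "matrix_inv A ** A = mat 1" by simp
  have "matrix_inv A = matrix_inv A ** (A ** X)" by (simp add: assms)
  also have "\<dots> = X" by (simp add: matrix_mul_assoc h)
  finally show ?thesis .
qed

lemma mat_lmult: "mat k ** (A::complex^'n^'m) = (\<chi> i j. k * A$i$j)"
  by (simp add: vec_eq_iff matrix_matrix_mult_def mat_def if_distrib[of "\<lambda>x. x * _"] cong: if_cong)

lemma mat_rmult: "(A::complex^'n^'m) ** mat k = (\<chi> i j. A$i$j * k)"
  by (simp add: vec_eq_iff matrix_matrix_mult_def mat_def if_distrib[of "\<lambda>x. _ * x"] cong: if_cong)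

lemma matrix_diff_ldistrib: "(A::complex^'k^'m) ** (B - C) = A ** B - A ** C"
  by (simp add: vec_eq_iff matrix_matrix_mult_def algebra_simps sum_subtractf)

lemma matrix_rzero: "(A::complex^'k^'m) ** (0::complex^'n^'k) = 0"
  by (simp add: vec_eq_iff matrix_matrix_mult_def)

lemma matrix_lzero: "(0::complex^'k^'m) ** (A::complex^'n^'k) = 0"
  by (simp add: vec_eq_iff matrix_matrix_mult_def)

lemma small_invertible:
  fixes E :: "complex^'n^'n" assumes "mnorm E < 1" shows "invertible (mat 1 - E)"
proof -
  have "\<forall>x. (mat 1 - E) *v x = 0 \<longrightarrow> x = 0"
  proof (intro allI impI)
    fix x assume "(mat 1 - E) *v x = 0"
    then have x: "x = E *v x" by (simp add: matrix_vector_mult_diff_rdistrib)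
    have le: "vnorm x \<le> mnorm E * vnorm x" using vnorm_mult[of E x] x by simp
    have "vnorm x = 0"
    proof (rule ccontr)
      assume "vnorm x \<noteq> 0"
      then have "vnorm x > 0" using vnorm_nonneg[of x] by simp
      then have "mnorm E * vnorm x < 1 * vnorm x" using assms by (intro mult_strict_right_mono)
      then show False using le by simp
    qed
    then show "x = 0" unfolding vnorm_def by (simp add: sum_nonneg_eq_0_iff vec_eq_iff)
  qed
  then show ?thesis by (metis invertible_left_inverse matrix_left_invertible_ker)
qed

lemma small_inv_bound:
  fixes E :: "complex^'n^'n" assumes "mnorm E \<le> 1/2"
  shows "mnorm (matrix_inv (mat 1 - E) - mat 1) \<le> 2 * real CARD('n) * mnorm E"
proof -
  define B where "B = matrix_inv (mat 1 - E)"
  have inv: "invertible (mat 1 - E)" using assms by (intro small_invertible) simp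
  have "B ** (mat 1 - E) = mat 1" using matrix_inv_props[OF inv] B_def by simp
  then have "B - B ** E = mat 1" by (simp add: matrix_diff_ldistrib)
  then have BB: "B = mat 1 + B ** E" by (simp add: diff_eq_eq)
  then have BE: "B - mat 1 = B ** E" by (metis add_diff_cancel_left')
  from BB have "mnorm B \<le> mnorm (mat 1 :: complex^'n^'n) + mnorm (B ** E)"
    by (metis mnorm_add)
  also have "\<dots> \<le> real CARD('n) + mnorm B * mnorm E"
    using mnorm_mult[of B E] by (simp add: mnorm_mat1)
  finally have a: "mnorm B \<le> real CARD('n) + mnorm B * mnorm E" .
  have "mnorm B * mnorm E \<le> mnorm B * (1/2)"
    using assms mnorm_nonneg[of B] by (intro mult_left_mono) auto
  with a have b: "mnorm B \<le> 2 * real CARD('n)" by simp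
  have "mnorm (B - mat 1) \<le> mnorm B * mnorm E" using BE mnorm_mult[of B E] by simp
  also have "\<dots> \<le> 2 * real CARD('n) * mnorm E"
    using b mnorm_nonneg[of E] by (intro mult_right_mono) auto
  finally show ?thesis unfolding B_def .
qed

lemma inv_tendsto:
  fixes E :: "_ \<Rightarrow> complex^'n^'n"
  assumes "((\<lambda>x. mnorm (E x)) \<longlongrightarrow> 0) F"
  shows "((\<lambda>x. matrix_inv (mat 1 - E x)) \<longlongrightarrow> mat 1) F"
proof (rule mnorm_tendsto_imp)
  have ev: "eventually (\<lambda>x. mnorm (E x) < 1/2) F"
    using order_tendstoD(2)[OF assms, of "1/2"] by simp
  show "((\<lambda>x. mnorm (matrix_inv (mat 1 - E x) - mat 1)) \<longlongrightarrow> 0) F"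
  proof (rule tendsto_0_le[OF assms, where K="2 * real CARD('n)"])
    show "\<forall>\<^sub>F x in F. norm (mnorm (matrix_inv (mat 1 - E x) - mat 1))
            \<le> norm (mnorm (E x)) * (2 * real CARD('n))"
      using ev
    proof eventually_elim
      case (elim x)
      then show ?case using small_inv_bound[of "E x"] mnorm_nonneg[of "E x"]
        mnorm_nonneg[of "matrix_inv (mat 1 - E x) - mat 1"] by (simp add: mult.commute)
    qed
  qed
qed


lemma mat_mat: "(mat a :: complex^'n^'n) ** mat b = mat (a * b)"
  unfolding mat_lmult by (simp add: vec_eq_iff mat_def)

lemma scaled_inv:
  fixes M :: "complex \<Rightarrow> complex^'n^'n"
  assumes "(M \<longlongrightarrow> L) at_infinity"
  shows "((\<lambda>s. mat s ** matrix_inv (mat s - M s)) \<longlongrightarrow> mat 1) at_infinity"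
proof -
  define E where "E s = (\<chi> i j. inverse s * M s $ i $ j)" for s
  have mE: "mnorm (E s) = norm (inverse s) * mnorm (M s)" for s
    unfolding mnorm_def E_def by (simp add: sum_distrib_left norm_mult)
  have "((\<lambda>s. norm (inverse s) * mnorm (M s)) \<longlongrightarrow> 0 * mnorm L) at_infinity"
    by (intro tendsto_mult tendsto_imp_mnorm assms tendsto_norm_zero tendsto_inverse_0)
  then have E0: "((\<lambda>s. mnorm (E s)) \<longlongrightarrow> 0) at_infinity" by (simp add: mE)
  have ev1: "eventually (\<lambda>s. mnorm (E s) < 1) at_infinity"
    using order_tendstoD(2)[OF E0, of 1] by simp
  have ev2: "eventually (\<lambda>s::complex. s \<noteq> 0) at_infinity"
    unfolding eventually_at_infinity by (rule exI[of _ 1]) auto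
  have "eventually (\<lambda>s. matrix_inv (mat 1 - E s) = mat s ** matrix_inv (mat s - M s)) at_infinity"
    using ev1 ev2
  proof eventually_elim
    case (elim s)
    define N where "N = mat 1 - E s"
    define B where "B = matrix_inv N"
    have inv: "invertible N" using elim small_invertible N_def by blast
    have NB: "N ** B = mat 1" and BN: "B ** N = mat 1" using matrix_inv_props[OF inv] B_def by auto
    have ME: "mat s ** E s = M s" using elim(2)
      by (simp add: mat_lmult E_def vec_eq_iff)
    have MN: "mat s - M s = mat s ** N"
      by (simp add: N_def matrix_diff_ldistrib ME)
    have "matrix_inv (mat s - M s) = B ** mat (inverse s)"
    proof (rule matrix_inv_eq)
      have "(mat s ** N) ** (B ** mat (inverse s)) = mat s ** ((N ** B) ** mat (inverse s))"
        by (simp only: matrix_mul_assoc)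
      also have "\<dots> = mat 1" using elim(2) by (simp add: NB mat_mat)
      finally show "(mat s - M s) ** (B ** mat (inverse s)) = mat 1" by (simp only: MN)
      have "(B ** mat (inverse s)) ** (mat s ** N) = (B ** (mat (inverse s) ** mat s)) ** N"
        by (simp only: matrix_mul_assoc)
      also have "\<dots> = mat 1" using elim(2) by (simp add: BN mat_mat)
      finally show "B ** mat (inverse s) ** (mat s - M s) = mat 1" by (simp only: MN)
    qed
    then have "mat s ** matrix_inv (mat s - M s) = (mat s ** B) ** mat (inverse s)"
      by (simp add: matrix_mul_assoc)
    also have "mat s ** B = B ** mat s" by (simp add: mat_lmult mat_rmult mult.commute)
    also have "(B ** mat s) ** mat (inverse s) = B"
      using elim(2) by (simp only: matrix_mul_assoc[symmetric] mat_mat) simp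
    finally show ?case by (simp add: B_def N_def)
  qed
  moreover have "((\<lambda>s. matrix_inv (mat 1 - E s)) \<longlongrightarrow> mat 1) at_infinity"
    by (rule inv_tendsto[OF E0])
  ultimately show ?thesis by (rule Lim_transform_eventually[rotated])
qed


lemma inv_to_zero:
  fixes A :: "real^'n^'n"
  shows "((\<lambda>s. matrix_inv (mat s - cmat A)) \<longlongrightarrow> 0) at_infinity"
proof -
  have sc: "((\<lambda>s. mat s ** matrix_inv (mat s - cmat A)) \<longlongrightarrow> mat 1) at_infinity"
    by (rule scaled_inv) (rule tendsto_const)
  have ev2: "eventually (\<lambda>s::complex. s \<noteq> 0) at_infinity"
    unfolding eventually_at_infinity by (rule exI[of _ 1]) auto
  have "eventually (\<lambda>s. mat (inverse s) ** (mat s ** matrix_inv (mat s - cmat A))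
          = matrix_inv (mat s - cmat A)) at_infinity"
    using ev2 by eventually_elim (simp add: matrix_mul_assoc mat_mat)
  moreover have "((\<lambda>s. mat (inverse s) ** (mat s ** matrix_inv (mat s - cmat A))) \<longlongrightarrow> 0) at_infinity"
  proof -
    have "((\<lambda>s. (\<chi> i j. inverse s * (mat s ** matrix_inv (mat s - cmat A)) $ i $ j))
            \<longlongrightarrow> (\<chi> i j. 0 * (mat 1 :: complex^'n^'n) $ i $ j)) at_infinity"
    proof (intro vec_tendstoI)
      fix i j
      have "((\<lambda>s. inverse s * (mat s ** matrix_inv (mat s - cmat A)) $ i $ j)
              \<longlongrightarrow> 0 * (mat 1 :: complex^'n^'n) $ i $ j) at_infinity"
        by (rule tendsto_mult[OF tendsto_inverse_0 tendsto_vec_nth[OF tendsto_vec_nth[OF sc]]])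
      then show "((\<lambda>s. (\<chi> i j. inverse s * (mat s ** matrix_inv (mat s - cmat A)) $ i $ j) $ i $ j)
            \<longlongrightarrow> (\<chi> i j. 0 * (mat 1 :: complex^'n^'n) $ i $ j) $ i $ j) at_infinity" by simp
    qed
    moreover have "(\<chi> i j. 0 * (mat 1 :: complex^'n^'n) $ i $ j) = (0::complex^'n^'n)"
      by (simp add: vec_eq_iff)
    moreover have "(\<lambda>s. mat (inverse s) ** (mat s ** matrix_inv (mat s - cmat A)))
       = (\<lambda>s. (\<chi> i j. inverse s * (mat s ** matrix_inv (mat s - cmat A)) $ i $ j))"
      by (simp only: mat_lmult)
    ultimately show ?thesis by simp
  qed
  ultimately show ?thesis by (rule Lim_transform_eventually[rotated])
qed

lemma tendsto_diagm:
  fixes f :: "_ \<Rightarrow> complex^'n^'n"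
  assumes "(f \<longlongrightarrow> L) F"
  shows "((\<lambda>x. diagm (f x)) \<longlongrightarrow> diagm L) F"
  unfolding diagm_def
proof (intro vec_tendstoI)
  fix i j
  show "((\<lambda>x. (\<chi> i j. if i = j then f x $ i $ j else 0) $ i $ j) \<longlongrightarrow>
         (\<chi> i j. if i = j then L $ i $ j else 0) $ i $ j) F"
    by (cases "i = j") (simp_all add: tendsto_vec_nth assms)
qed

lemma cmat_diff: "cmat (A - B) = cmat A - cmat B"
  by (simp add: cmat_def vec_eq_iff)

lemma cmat_diagm: "cmat (diagm A) = diagm (cmat A)"
  by (simp add: cmat_def diagm_def vec_eq_iff)

theorem proposition1:
  fixes A11 :: "real^'p^'p" and A12 :: "real^'h^'p"
    and A21 :: "real^'p^'h" and A22 :: "real^'h^'h"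
    and B1 :: "real^'m^'p" and B2 :: "real^'m^'h"
  shows "((\<lambda>s. Ro A11 A12 A21 A22 s) \<longlongrightarrow> cmat (diagm A11)) at_infinity \<and>
         ((\<lambda>s. mat s ** DSF_Q A11 A12 A21 A22 s) \<longlongrightarrow> cmat (A11 - diagm A11)) at_infinity \<and>
         ((\<lambda>s. mat s ** DSF_P A11 A12 A21 A22 B1 B2 s) \<longlongrightarrow> cmat B1) at_infinity"
proof -
  have I: "((\<lambda>s. matrix_inv (mat s - cmat A22)) \<longlongrightarrow> 0) at_infinity" by (rule inv_to_zero)
  have W: "((\<lambda>s. Wo A11 A12 A21 A22 s) \<longlongrightarrow> cmat A11) at_infinity"
  proof -
    have "((\<lambda>s. cmat A11 + cmat A12 ** matrix_inv (mat s - cmat A22) ** cmat A21)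
           \<longlongrightarrow> cmat A11 + cmat A12 ** 0 ** cmat A21) at_infinity"
      by (intro tendsto_add tendsto_const tendsto_matmul I)
    then show ?thesis by (simp add: Wo_def matrix_rzero matrix_lzero)
  qed
  have V: "((\<lambda>s. Vo B1 A12 A22 B2 s) \<longlongrightarrow> cmat B1) at_infinity"
  proof -
    have "((\<lambda>s. cmat B1 + cmat A12 ** matrix_inv (mat s - cmat A22) ** cmat B2)
           \<longlongrightarrow> cmat B1 + cmat A12 ** 0 ** cmat B2) at_infinity"
      by (intro tendsto_add tendsto_const tendsto_matmul I)
    then show ?thesis by (simp add: Vo_def matrix_rzero matrix_lzero)
  qed
  have R: "((\<lambda>s. Ro A11 A12 A21 A22 s) \<longlongrightarrow> cmat (diagm A11)) at_infinity"
    unfolding Ro_def cmat_diagm by (rule tendsto_diagm[OF W])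
  have S: "((\<lambda>s. mat s ** matrix_inv (mat s - Ro A11 A12 A21 A22 s)) \<longlongrightarrow> mat 1) at_infinity"
    by (rule scaled_inv[OF R])
  have Q: "((\<lambda>s. mat s ** DSF_Q A11 A12 A21 A22 s) \<longlongrightarrow> cmat (A11 - diagm A11)) at_infinity"
  proof -
    have "((\<lambda>s. (mat s ** matrix_inv (mat s - Ro A11 A12 A21 A22 s)) **
                 (Wo A11 A12 A21 A22 s - Ro A11 A12 A21 A22 s))
           \<longlongrightarrow> mat 1 ** (cmat A11 - cmat (diagm A11))) at_infinity"
      by (intro tendsto_matmul S tendsto_diff W R)
    then show ?thesis by (simp add: DSF_Q_def matrix_mul_assoc cmat_diff)
  qed
  have P: "((\<lambda>s. mat s ** DSF_P A11 A12 A21 A22 B1 B2 s) \<longlongrightarrow> cmat B1) at_infinity"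
  proof -
    have "((\<lambda>s. (mat s ** matrix_inv (mat s - Ro A11 A12 A21 A22 s)) ** Vo B1 A12 A22 B2 s)
           \<longlongrightarrow> mat 1 ** cmat B1) at_infinity"
      by (intro tendsto_matmul S V)
    then show ?thesis by (simp add: DSF_P_def matrix_mul_assoc)
  qed
  show ?thesis using R Q P by blast
qed

end
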